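(* Let $\Phi:\mathbb{R}^N\to\mathbb{R}^M$ and $L:\mathbb{R}^P\to\mathbb{R}^N$ be linear operators, let $\|\cdot\|_A$ be a norm on $\mathbb{R}^P$ with dual norm $\|\cdot\|_A^*$, and set $R(x)=\|L^*x\|_A$. Let $y\in\mathbb{R}^M$, $\lambda>0$, and let $x^\star$ be a minimizer of $\min_{x\in\mathbb{R}^N}\tfrac12\|y-\Phi x\|_2^2+\lambda R(x)$. Assume $\|\cdot\|_A$ is decomposable at $u^\star=L^*x^\star$ with associated subspace $T$ and vector $e\in T$, and let $S=T^\perp$. Assume that there exist $\eta\in\mathbb{R}^M$ and $\alpha\in\partial\|\cdot\|_A(L^*x^\star)$ with $\Phi^*\eta=L\alpha$ and $\|\alpha_S\|_A^*<1$, and that $\Phi$ is injective on $\ker(L_S^* )$. Then $x^\star$ is the unique minimizer of this problem.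
   Context: For a subspace $V\subset\mathbb{R}^P$, $P_V$ denotes the orthogonal projector onto $V$, and $L_V=LP_V$, $L_V^*=P_VL^*$, $\alpha_V=P_V\alpha$ for $\alpha\in\mathbb{R}^P$. A norm $\|\cdot\|_A$ on $\mathbb{R}^P$ is decomposable at $u\in\mathbb{R}^P$ if (i) there exist a subspace $T\subset\mathbb{R}^P$ and a vector $e\in T$ such that $\partial\|\cdot\|_A(u)=\{\alpha\in\mathbb{R}^P:\ \alpha_T=e,\ \|\alpha_{T^\perp}\|_A^*\le 1\}$, and (ii) for every $z\in T^\perp$, $\|z\|_A=\sup\{\langle v,z\rangle: v\in T^\perp,\ \|v\|_A^*\le 1\}$. *)

theory Defs
  imports "HOL-Analysis.Analysis"
begin

definition is_norm :: "('a::real_vector \<Rightarrow> real) \<Rightarrow> bool" where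
  "is_norm N \<longleftrightarrow> (\<forall>x. 0 \<le> N x) \<and> (\<forall>x. N x = 0 \<longleftrightarrow> x = 0)
     \<and> (\<forall>c x. N (c *\<^sub>R x) = \<bar>c\<bar> * N x) \<and> (\<forall>x y. N (x + y) \<le> N x + N y)"

definition dual_norm :: "('a::real_inner \<Rightarrow> real) \<Rightarrow> 'a \<Rightarrow> real" where
  "dual_norm N v = Sup {v \<bullet> z | z. N z \<le> 1}"

definition subdifferential :: "('a::real_inner \<Rightarrow> real) \<Rightarrow> 'a \<Rightarrow> 'a set" where
  "subdifferential f u = {a. \<forall>z. f u + a \<bullet> (z - u) \<le> f z}"

definition proj :: "'a::euclidean_space set \<Rightarrow> 'a \<Rightarrow> 'a" where
  "proj V x = (THE p. p \<in> V \<and> x - p \<in> orthogonal_comp V)"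

definition decomposable_at :: "('a::euclidean_space \<Rightarrow> real) \<Rightarrow> 'a \<Rightarrow> 'a set \<Rightarrow> 'a \<Rightarrow> bool" where
  "decomposable_at N u T e \<longleftrightarrow> subspace T \<and> e \<in> T
     \<and> subdifferential N u =
         {\<alpha>. proj T \<alpha> = e \<and> dual_norm N (proj (orthogonal_comp T) \<alpha>) \<le> 1}
     \<and> (\<forall>z \<in> orthogonal_comp T.
          N z = Sup {v \<bullet> z | v. v \<in> orthogonal_comp T \<and> dual_norm N v \<le> 1})"

end

theory Submission
  imports Defs
begin

lemma proj_unique:
  fixes V :: "'a::euclidean_space set"
  assumes "subspace V" "p \<in> V" "x - p \<in> orthogonal_comp V"
  shows "proj V x = p"
proof -
  have u: "q = p" if "q \<in> V" "x - q \<in> orthogonal_comp V" for q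
  proof -
    have "p - q \<in> V" using assms that by (simp add: subspace_diff)
    moreover have "p - q \<in> orthogonal_comp V"
    proof -
      have "(x - q) - (x - p) \<in> orthogonal_comp V"
        using assms(3) that(2) subspace_diff[OF subspace_orthogonal_comp] by blast
      moreover have "(x - q) - (x - p) = p - q" by simp
      ultimately show ?thesis by simp
    qed
    ultimately have "p - q = 0" using orthogonal_Int_0[OF assms(1)] by blast
    then show ?thesis by simp
  qed
  show ?thesis unfolding proj_def
  proof (rule the_equality)
    show "p \<in> V \<and> x - p \<in> orthogonal_comp V" using assms by blast
    fix q assume "q \<in> V \<and> x - q \<in> orthogonal_comp V"
    then show "q = p" using u by blast
  qed
qed

lemma proj_props:
  fixes V :: "'a::euclidean_space set"
  assumes "subspace V"
  shows "proj V x \<in> V \<and> x - proj V x \<in> orthogonal_comp V"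
proof -
  obtain v w where "x = v + w" "v \<in> V" "w \<in> orthogonal_comp V"
    using subspace_sum_orthogonal_comp [OF assms] set_plus_elim
    by (metis UNIV_I)
  then have "proj V x = v" using proj_unique[OF assms, of v x] by simp
  with \<open>x = v + w\<close> \<open>v \<in> V\<close> \<open>w \<in> orthogonal_comp V\<close> show ?thesis by simp
qed

lemma proj_comp:
  fixes V :: "'a::euclidean_space set"
  assumes "subspace V"
  shows "proj (orthogonal_comp V) x = x - proj V x"
proof (rule proj_unique)
  show "subspace (orthogonal_comp V)" by (rule subspace_orthogonal_comp)
  show "x - proj V x \<in> orthogonal_comp V" using proj_props[OF assms] by blast
  show "x - (x - proj V x) \<in> orthogonal_comp (orthogonal_comp V)"
    using proj_props[OF assms] orthogonal_comp_self[OF assms] by simp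
qed

lemma norm_sum_le:
  assumes "is_norm N" "finite A"
  shows "N (sum f A) \<le> (\<Sum>i\<in>A. N (f i))"
  using assms(2)
proof (induction A rule: finite_induct)
  case empty
  then show ?case using assms(1) unfolding is_norm_def by (metis order_refl sum.empty)
next
  case (insert a A)
  then show ?case using assms(1) unfolding is_norm_def
    by (smt (verit) sum.insert)
qed

lemma norm_upper:
  fixes N :: "'a::euclidean_space \<Rightarrow> real"
  assumes "is_norm N"
  shows "N z \<le> (\<Sum>b\<in>Basis. N b) * norm z"
proof -
  have "N z = N (\<Sum>b\<in>Basis. (z \<bullet> b) *\<^sub>R b)" by (simp add: euclidean_representation)
  also have "\<dots> \<le> (\<Sum>b\<in>Basis. N ((z \<bullet> b) *\<^sub>R b))" by (rule norm_sum_le[OF assms]) simp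
  also have "\<dots> = (\<Sum>b\<in>Basis. \<bar>z \<bullet> b\<bar> * N b)" using assms unfolding is_norm_def by simp
  also have "\<dots> \<le> (\<Sum>b\<in>Basis. norm z * N b)"
    by (rule sum_mono) (use assms Basis_le_norm in \<open>auto simp: is_norm_def intro!: mult_right_mono\<close>)
  also have "\<dots> = norm z * (\<Sum>b\<in>Basis. N b)" by (simp add: sum_distrib_left)
  also have "\<dots> = (\<Sum>b\<in>Basis. N b) * norm z" by (rule mult.commute)
  finally show ?thesis .
qed

lemma norm_lower:
  fixes N :: "'a::euclidean_space \<Rightarrow> real"
  assumes "is_norm N"
  shows "\<exists>c>0. \<forall>z. c * norm z \<le> N z"
proof -
  define K where "K = (\<Sum>b\<in>Basis. N b)"
  have K0: "K \<ge> 0" unfolding K_def using assms by (simp add: is_norm_def sum_nonneg)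
  have lip: "\<bar>N x - N y\<bar> \<le> K * norm (x - y)" for x y
  proof -
    have a: "N x \<le> N (x - y) + N y" using assms unfolding is_norm_def
      by (metis diff_add_cancel)
    have b: "N y \<le> N (y - x) + N x" using assms unfolding is_norm_def
      by (metis diff_add_cancel)
    have "N (y - x) = N ((-1) *\<^sub>R (x - y))" by simp
    also have "\<dots> = \<bar>-1\<bar> * N (x - y)" using assms unfolding is_norm_def by blast
    also have "\<dots> = N (x - y)" by simp
    finally have c: "N (y - x) = N (x - y)" .
    have "N (x - y) \<le> K * norm (x - y)" using norm_upper[OF assms] K_def by simp
    with a b c show ?thesis by linarith
  qed
  have cont: "continuous_on (sphere 0 1) N"
    unfolding continuous_on_iff
  proof (intro ballI allI impI)
    fix x e assume "x \<in> sphere (0::'a) 1" "(0::real) < e"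
    show "\<exists>d>0. \<forall>x'\<in>sphere 0 1. dist x' x < d \<longrightarrow> dist (N x') (N x) < e"
    proof (intro exI[of _ "e / (K + 1)"] conjI ballI impI)
      show "e / (K + 1) > 0" using \<open>e > 0\<close> K0 by simp
      fix x' assume "dist x' x < e / (K + 1)"
      then have "(K+1) * norm (x' - x) < e" using K0 by (simp add: dist_norm field_simps)
      moreover have "dist (N x') (N x) \<le> K * norm (x' - x)" using lip by (simp add: dist_real_def)
      moreover have "K * norm (x' - x) \<le> (K+1) * norm (x' - x)" by (simp add: mult_right_mono)
      ultimately show "dist (N x') (N x) < e" by linarith
    qed
  qed
  obtain b :: 'a where b: "b \<in> Basis" using nonempty_Basis by blast
  then have "b \<in> sphere 0 1" by simp
  then obtain x0 where x0: "x0 \<in> sphere (0::'a) 1" "\<forall>y\<in>sphere 0 1. N x0 \<le> N y"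
    using continuous_attains_inf[OF compact_sphere _ cont] by blast
  have "x0 \<noteq> 0" using x0 by auto
  then have pos: "N x0 > 0" using assms unfolding is_norm_def by (metis less_eq_real_def)
  have "N x0 * norm z \<le> N z" for z
  proof (cases "z = 0")
    case True
    have "N z \<ge> 0" using assms unfolding is_norm_def by blast
    then show ?thesis using True by simp
  next
    case False
    have "inverse (norm z) *\<^sub>R z \<in> sphere 0 1" using False by simp
    then have "N x0 \<le> N (inverse (norm z) *\<^sub>R z)" using x0 by blast
    also have "\<dots> = inverse (norm z) * N z" using assms unfolding is_norm_def by simp
    finally show ?thesis using False by (simp add: field_simps)
  qed
  with pos show ?thesis by blast
qed

lemma dual_ineq:
  fixes N :: "'a::euclidean_space \<Rightarrow> real"
  assumes "is_norm N"
  shows "a \<bullet> z \<le> dual_norm N a * N z"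
proof -
  obtain c where c: "c > 0" "\<forall>z. c * norm z \<le> N z" using norm_lower[OF assms] by blast
  have bdd: "bdd_above {a \<bullet> z | z. N z \<le> 1}"
  proof (rule bdd_aboveI)
    fix t assume "t \<in> {a \<bullet> z | z. N z \<le> 1}"
    then obtain z where z: "t = a \<bullet> z" "N z \<le> 1" by blast
    have cz: "c * norm z \<le> N z" using c(2) by blast
    have "c * norm z \<le> 1" using order_trans[OF cz z(2)] .
    then have nz: "norm z \<le> 1 / c" using c by (simp add: field_simps)
    have cs: "\<bar>a \<bullet> z\<bar> \<le> norm a * norm z" by (rule Cauchy_Schwarz_ineq2)
    have "t \<le> norm a * norm z" using abs_le_D1[OF cs] z(1) by simp
    also have "\<dots> \<le> norm a * (1 / c)" using mult_left_mono[OF nz norm_ge_zero] by simp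
    also have "\<dots> = norm a / c" by simp
    finally show "t \<le> norm a / c" .
  qed
  show ?thesis
  proof (cases "z = 0")
    case True
    have "N 0 = 0" using assms unfolding is_norm_def by blast
    then show ?thesis using True by simp
  next
    case False
    then have pz: "N z > 0" using assms unfolding is_norm_def by (metis less_eq_real_def)
    have "N (inverse (N z) *\<^sub>R z) = \<bar>inverse (N z)\<bar> * N z" using assms unfolding is_norm_def by blast
    then have "N (inverse (N z) *\<^sub>R z) = 1" using pz by simp
    then have mem: "a \<bullet> (inverse (N z) *\<^sub>R z) \<in> {a \<bullet> z | z. N z \<le> 1}"
      by (intro CollectI exI[of _ "inverse (N z) *\<^sub>R z"] conjI refl) simp
    have "a \<bullet> (inverse (N z) *\<^sub>R z) \<le> dual_norm N a"
      unfolding dual_norm_def by (rule cSup_upper[OF mem bdd])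
    then have "inverse (N z) * (a \<bullet> z) \<le> dual_norm N a" by simp
    then show ?thesis using pz by (simp add: field_simps)
  qed
qed


lemma parallelogram_half:
  fixes a b :: "'a::real_inner"
  shows "(norm ((1/2) *\<^sub>R (a + b)))\<^sup>2 = ((norm a)\<^sup>2 + (norm b)\<^sup>2) / 2 - (norm (a - b))\<^sup>2 / 4"
  by (simp add: power2_norm_eq_inner inner_add_left inner_add_right inner_diff_left inner_diff_right inner_commute algebra_simps) (simp add: field_simps)

lemma aux_lin:
  fixes qm qx qs p lm lx ls :: real
  assumes "qm = (qx + qs) / 2 - p / 4" "lm \<le> (1/2) * lx + (1/2) * ls"
  shows "(1/2) * qm + lm \<le> ((1/2) * qx + lx + ((1/2) * qs + ls)) / 2 - p / 8"
  using assms by argo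

theorem corollary1:
  fixes Phi :: "real^'n^'m" and L :: "real^'p^'n" and NA :: "real^'p \<Rightarrow> real"
    and y :: "real^'m" and lam :: real and xs :: "real^'n"
    and T :: "(real^'p) set" and e :: "real^'p"
    and eta :: "real^'m" and \<alpha> :: "real^'p"
  defines "F \<equiv> (\<lambda>x. (1/2) * (norm (y - Phi *v x))\<^sup>2 + lam * NA (transpose L *v x))"
  defines "S \<equiv> orthogonal_comp T"
  assumes norm_A: "is_norm NA"
    and lam_pos: "lam > 0"
    and min: "\<forall>x. F xs \<le> F x"
    and decomp: "decomposable_at NA (transpose L *v xs) T e"
    and alpha_sub: "\<alpha> \<in> subdifferential NA (transpose L *v xs)"
    and cert: "transpose Phi *v eta = L *v \<alpha>"
    and strict: "dual_norm NA (proj S \<alpha>) < 1"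
    and inj: "inj_on (\<lambda>x. Phi *v x) {x. proj S (transpose L *v x) = 0}"
  shows "\<forall>x. (\<forall>x'. F x \<le> F x') \<longrightarrow> x = xs"
proof (intro allI impI)
  fix x assume xmin: "\<forall>x'. F x \<le> F x'"
  have Fx: "F x = F xs" using xmin min by (meson order_antisym)
  have subT: "subspace T" and eT: "e \<in> T"
    and sd: "subdifferential NA (transpose L *v xs) =
         {\<alpha>. proj T \<alpha> = e \<and> dual_norm NA (proj (orthogonal_comp T) \<alpha>) \<le> 1}"
    and dec2: "\<forall>z \<in> orthogonal_comp T.
          NA z = Sup {v \<bullet> z | v. v \<in> orthogonal_comp T \<and> dual_norm NA v \<le> 1}"
    using decomp unfolding decomposable_at_def by blast+
  have N0: "\<forall>x. 0 \<le> NA x" and Nz: "\<forall>x. (NA x = 0) = (x = 0)"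
    and Nh: "\<forall>c x. NA (c *\<^sub>R x) = \<bar>c\<bar> * NA x" and Nt: "\<forall>x y. NA (x + y) \<le> NA x + NA y"
    using norm_A unfolding is_norm_def by blast+
  define u where "u = transpose L *v xs"
  define h where "h = x - xs"
  define w where "w = transpose L *v h"
  define z where "z = proj S w"
  have Lx: "transpose L *v x = u + w"
    unfolding u_def w_def h_def by (simp add: matrix_vector_mult_diff_distrib)
  define mid where "mid = (1/2) *\<^sub>R (x + xs)"
  have Phh: "Phi *v h = 0"
  proof -
    have ym: "y - Phi *v mid = (1/2) *\<^sub>R ((y - Phi *v x) + (y - Phi *v xs))"
      unfolding mid_def by (simp add: vec_eq_iff matrix_vector_mult_scaleR matrix_vector_right_distrib field_simps)
    have dd: "(y - Phi *v x) - (y - Phi *v xs) = - (Phi *v h)"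
      unfolding h_def by (simp add: matrix_vector_mult_diff_distrib)
    have q: "(norm (y - Phi *v mid))\<^sup>2 = ((norm (y - Phi *v x))\<^sup>2 + (norm (y - Phi *v xs))\<^sup>2) / 2
              - (norm (Phi *v h))\<^sup>2 / 4"
      unfolding ym parallelogram_half dd by simp
    have Lm: "transpose L *v mid = (1/2) *\<^sub>R (transpose L *v x) + (1/2) *\<^sub>R (transpose L *v xs)"
      unfolding mid_def by (simp add: matrix_vector_mult_scaleR matrix_vector_right_distrib scaleR_right_distrib)
    have "NA (transpose L *v mid) \<le> NA ((1/2) *\<^sub>R (transpose L *v x)) + NA ((1/2) *\<^sub>R (transpose L *v xs))"
      unfolding Lm using Nt by blast
    also have "\<dots> = (1/2) * NA (transpose L *v x) + (1/2) * NA (transpose L *v xs)"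
      using Nh by simp
    finally have r: "NA (transpose L *v mid) \<le> (1/2) * NA (transpose L *v x) + (1/2) * NA (transpose L *v xs)" .
    have l: "lam * NA (transpose L *v mid) \<le> (1/2) * (lam * NA (transpose L *v x)) + (1/2) * (lam * NA (transpose L *v xs))"
      using mult_left_mono[OF r, of lam] lam_pos by (simp add: algebra_simps)
    have "F mid \<le> (F x + F xs) / 2 - (norm (Phi *v h))\<^sup>2 / 8"
      unfolding F_def by (rule aux_lin[OF q l])
    moreover have "F xs \<le> F mid" using min by blast
    ultimately have "(norm (Phi *v h))\<^sup>2 \<le> 0" using Fx by argo
    then show ?thesis by simp
  qed
  have Pheq: "Phi *v x = Phi *v xs"
    using Phh unfolding h_def by (simp add: matrix_vector_mult_diff_distrib)
  have NAeq: "NA (u + w) = NA u"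
  proof -
    have "lam * NA (transpose L *v x) = lam * NA (transpose L *v xs)"
      using Fx unfolding F_def Pheq by simp
    then show ?thesis using lam_pos Lx u_def by simp
  qed
  have aw: "\<alpha> \<bullet> w = 0"
  proof -
    have "w \<bullet> \<alpha> = h \<bullet> (L *v \<alpha>)"
      unfolding w_def by (simp add: dot_lmul_matrix)
    also have "\<dots> = h \<bullet> (eta v* Phi)" using cert by simp
    also have "\<dots> = eta \<bullet> (Phi *v h)" by (metis dot_lmul_matrix inner_commute)
    finally show ?thesis using Phh by (simp add: inner_commute)
  qed
  have subS: "subspace S" unfolding S_def by (rule subspace_orthogonal_comp)
  have projS: "proj S v = v - proj T v" for v unfolding S_def by (rule proj_comp[OF subT])
  have aT: "proj T \<alpha> = e" using alpha_sub sd by blast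
  define aS where "aS = proj S \<alpha>"
  have aS: "aS = \<alpha> - e" unfolding aS_def projS aT ..
  have zS: "z \<in> S" unfolding z_def using proj_props[OF subS] by blast
  have wz: "w - z \<in> T" unfolding z_def projS using proj_props[OF subT] by simp
  have orth: "v \<bullet> t = 0" if "v \<in> S" "t \<in> T" for v t
    using that unfolding S_def orthogonal_comp_def orthogonal_def by (simp add: inner_commute)
  have key: "v \<bullet> z \<le> - (e \<bullet> w)" if v: "v \<in> S" "dual_norm NA v \<le> 1" for v
  proof -
    define \<beta> where "\<beta> = e + v"
    have pT: "proj T \<beta> = e" unfolding \<beta>_def
      by (rule proj_unique[OF subT eT]) (use v S_def in simp)
    have pS: "proj (orthogonal_comp T) \<beta> = v" using projS[of \<beta>] pT unfolding S_def \<beta>_def by simp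
    have "\<beta> \<in> subdifferential NA u" using sd pT pS v u_def by simp
    then have "NA u + \<beta> \<bullet> ((u + w) - u) \<le> NA (u + w)" unfolding subdifferential_def by blast
    then have "\<beta> \<bullet> w \<le> 0" using NAeq by simp
    moreover have "v \<bullet> w = v \<bullet> z"
    proof -
      have "v \<bullet> (w - z) = 0" using orth[OF v(1) wz] .
      then show ?thesis by (simp add: inner_diff_right)
    qed
    ultimately show ?thesis unfolding \<beta>_def by (simp add: inner_add_left)
  qed
  have Nzle: "NA z \<le> - (e \<bullet> w)"
  proof -
    have "NA z = Sup {v \<bullet> z | v. v \<in> orthogonal_comp T \<and> dual_norm NA v \<le> 1}"
      using dec2 zS S_def by blast
    also have "\<dots> \<le> - (e \<bullet> w)"
    proof (rule cSup_least)
      have "dual_norm NA 0 = 0"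
      proof -
        have "NA 0 = 0" using Nz by blast
        then have "NA 0 \<le> 1" by simp
        then have "{(0::real^'p) \<bullet> z | z. NA z \<le> 1} = {0}" by auto
        then show ?thesis unfolding dual_norm_def by simp
      qed
      then show "{v \<bullet> z | v. v \<in> orthogonal_comp T \<and> dual_norm NA v \<le> 1} \<noteq> {}"
        using subspace_0[OF subspace_orthogonal_comp] by force
      fix t assume "t \<in> {v \<bullet> z | v. v \<in> orthogonal_comp T \<and> dual_norm NA v \<le> 1}"
      then show "t \<le> - (e \<bullet> w)" using key S_def by blast
    qed
    finally show ?thesis .
  qed
  have "- (e \<bullet> w) = aS \<bullet> w" using aw aS by (simp add: inner_diff_left)
  also have "\<dots> = aS \<bullet> z"
  proof -
    have "aS \<in> S" unfolding aS_def using proj_props[OF subS] by blast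
    then have "aS \<bullet> (w - z) = 0" using orth wz by blast
    then show ?thesis by (simp add: inner_diff_right)
  qed
  also have "\<dots> \<le> dual_norm NA aS * NA z" by (rule dual_ineq[OF norm_A])
  finally have "NA z \<le> dual_norm NA aS * NA z" using Nzle by linarith
  moreover have "dual_norm NA aS < 1" using strict aS_def by simp
  moreover have "NA z \<ge> 0" using N0 by blast
  ultimately have "NA z = 0"
  proof -
    assume a1: "NA z \<le> dual_norm NA aS * NA z" and a2: "dual_norm NA aS < 1" and a3: "NA z \<ge> 0"
    show "NA z = 0"
    proof (rule ccontr)
      assume "NA z \<noteq> 0"
      then have "NA z > 0" using a3 by simp
      then have "dual_norm NA aS * NA z < 1 * NA z" using mult_strict_right_mono[OF a2] by blast
      then show False using a1 by simp
    qed
  qed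
  then have "z = 0" using Nz by blast
  then have hin: "h \<in> {x. proj S (transpose L *v x) = 0}" unfolding z_def w_def by simp
  have zin: "0 \<in> {x. proj S (transpose L *v x) = (0::real^'p)}"
    using proj_unique[OF subS subspace_0[OF subS], of 0] by (simp add: subspace_0 subspace_orthogonal_comp)
  have "h = 0" using inj_onD[OF inj _ hin zin] Phh by simp
  then show "x = xs" unfolding h_def by simp
qed

end
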